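(* Let $A=(a_{ij})$ be an $n\times n$ symmetric matrix with nonnegative entries and zero diagonal, $V=\{1,\dots,n\}$, and let $S\subseteq V$ with $S\neq\emptyset$. Define $$\gamma_S=\max_{\mathbf{x}\in\Delta_{V\setminus S}}\ \min_{i\in S}\ \frac{\mathbf{x}'A\mathbf{x}-(A\mathbf{x})_i}{\mathbf{x}'\mathbf{x}}.$$ Then $\gamma_S\le\lambda_{\max}(A_{V\setminus S})$, where $\lambda_{\max}(A_{V\setminus S})$ is the largest eigenvalue of the principal submatrix of $A$ indexed by the elements of $V\setminus S$.
   Context: $\Delta=\{\mathbf{x}\in\mathbb{R}^n:\sum_i x_i=1,\ x_i\ge 0\}$ is the standard simplex; for $T\subseteq V$, $\Delta_T=\{\mathbf{x}\in\Delta:\sigma(\mathbf{x})\subseteq T\}$, where $\sigma(\mathbf{x})=\{i: x_i>0\}$. A prime denotes transposition. *)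

theory Defs
  imports "HOL-Analysis.Analysis"
begin

text \<open>Vectors in R^n are functions nat => real, indexed by V = {..<n} (0-based),
  and n x n matrices are functions nat => nat => real.\<close>

definition simplex_on :: "nat set \<Rightarrow> nat set \<Rightarrow> (nat \<Rightarrow> real) set" where
  "simplex_on V T = {x. (\<forall>i\<in>V. 0 \<le> x i) \<and> (\<Sum>i\<in>V. x i) = 1
      \<and> (\<forall>i. i \<notin> V \<longrightarrow> x i = 0) \<and> {i\<in>V. 0 < x i} \<subseteq> T}"

definition matvec :: "(nat \<Rightarrow> nat \<Rightarrow> real) \<Rightarrow> nat set \<Rightarrow> (nat \<Rightarrow> real) \<Rightarrow> nat \<Rightarrow> real" where
  "matvec A V x i = (\<Sum>j\<in>V. A i j * x j)"

definition quad_form :: "(nat \<Rightarrow> nat \<Rightarrow> real) \<Rightarrow> nat set \<Rightarrow> (nat \<Rightarrow> real) \<Rightarrow> real" where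
  "quad_form A V x = (\<Sum>i\<in>V. x i * matvec A V x i)"

definition gamma_S :: "(nat \<Rightarrow> nat \<Rightarrow> real) \<Rightarrow> nat set \<Rightarrow> nat set \<Rightarrow> real" where
  "gamma_S A V S = Sup ((\<lambda>x. Min ((\<lambda>i. (quad_form A V x - matvec A V x i) / (\<Sum>j\<in>V. x j * x j)) ` S))
                        ` simplex_on V (V - S))"

definition is_eigenvalue_sub :: "(nat \<Rightarrow> nat \<Rightarrow> real) \<Rightarrow> nat set \<Rightarrow> real \<Rightarrow> bool" where
  "is_eigenvalue_sub A T \<mu> \<longleftrightarrow> (\<exists>x::nat \<Rightarrow> real. (\<exists>i\<in>T. x i \<noteq> 0) \<and>
       (\<forall>i\<in>T. (\<Sum>j\<in>T. A i j * x j) = \<mu> * x i))"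

definition lambda_max_sub :: "(nat \<Rightarrow> nat \<Rightarrow> real) \<Rightarrow> nat set \<Rightarrow> real" where
  "lambda_max_sub A T = Max {\<mu>. is_eigenvalue_sub A T \<mu>}"

end

theory Submission
  imports Defs "Jordan_Normal_Form.Char_Poly"
begin

lemma eig_finite:
  assumes fT: "finite T"
  shows "finite {\<mu>. is_eigenvalue_sub A T \<mu>}"
proof -
  obtain h where h: "bij_betw h {0..<card T} T" using ex_bij_betw_nat_finite[OF fT] by blast
  define k where "k = card T"
  define Am where "Am = mat k k (\<lambda>(a,b). A (h a) (h b))"
  have Am: "Am \<in> carrier_mat k k" unfolding Am_def by simp
  have "{\<mu>. is_eigenvalue_sub A T \<mu>} \<subseteq> {\<mu>. poly (char_poly Am) \<mu> = 0}"
  proof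
    fix \<mu> assume "\<mu> \<in> {\<mu>. is_eigenvalue_sub A T \<mu>}"
    then obtain x where x1: "\<exists>i\<in>T. x i \<noteq> 0" and x2: "\<forall>i\<in>T. (\<Sum>j\<in>T. A i j * x j) = \<mu> * x i"
      unfolding is_eigenvalue_sub_def by auto
    define v where "v = vec k (\<lambda>a. x (h a))"
    have v: "v \<in> carrier_vec k" unfolding v_def by simp
    have "v \<noteq> 0\<^sub>v k"
    proof
      assume "v = 0\<^sub>v k"
      then have z: "\<forall>a<k. x (h a) = 0" unfolding v_def
        by (metis index_vec index_zero_vec(1))
      from x1 obtain i where "i \<in> T" "x i \<noteq> 0" by blast
      from h \<open>i\<in>T\<close> have "i \<in> h ` {0..<k}" by (simp add: bij_betw_def k_def)
      then obtain a where "a < k" "h a = i" by auto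
      with z \<open>x i \<noteq> 0\<close> show False by auto
    qed
    moreover have "Am *\<^sub>v v = \<mu> \<cdot>\<^sub>v v"
    proof (rule eq_vecI)
      show "dim_vec (Am *\<^sub>v v) = dim_vec (\<mu> \<cdot>\<^sub>v v)" using Am v by simp
      fix a assume "a < dim_vec (\<mu> \<cdot>\<^sub>v v)"
      then have a: "a < k" using v by simp
      have "(Am *\<^sub>v v) $ a = (\<Sum>b\<in>{0..<k}. A (h a) (h b) * x (h b))"
        using a unfolding Am_def v_def by (simp add: mult_mat_vec_def scalar_prod_def row_def)
      also have "\<dots> = (\<Sum>j\<in>T. A (h a) j * x j)"
        using sum.reindex_bij_betw[OF h, of "\<lambda>j. A (h a) j * x j"] unfolding k_def by simp
      also have "\<dots> = \<mu> * x (h a)" using x2 a h unfolding k_def bij_betw_def by auto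
      finally show "(Am *\<^sub>v v) $ a = (\<mu> \<cdot>\<^sub>v v) $ a" using a unfolding v_def by simp
    qed
    ultimately have "eigenvalue Am \<mu>" unfolding eigenvalue_def eigenvector_def
      using Am v by auto
    then show "\<mu> \<in> {\<mu>. poly (char_poly Am) \<mu> = 0}" using eigenvalue_root_char_poly[OF Am] by simp
  qed
  moreover have "char_poly Am \<noteq> 0" using degree_monic_char_poly[OF Am] by auto
  ultimately show ?thesis using poly_roots_finite finite_subset by blast
qed
definition bf :: "(nat \<Rightarrow> nat \<Rightarrow> real) \<Rightarrow> nat set \<Rightarrow> (nat \<Rightarrow> real) \<Rightarrow> (nat \<Rightarrow> real) \<Rightarrow> real" where
  "bf A T u v = (\<Sum>i\<in>T. u i * (\<Sum>j\<in>T. A i j * v j))"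

definition nr :: "nat set \<Rightarrow> (nat \<Rightarrow> real) \<Rightarrow> real" where
  "nr T u = (\<Sum>i\<in>T. u i * u i)"

lemma bf_expand:
  "bf A T (\<lambda>j. u j + t * v j) (\<lambda>j. u j + t * v j)
    = bf A T u u + t * (bf A T u v + bf A T v u) + t^2 * bf A T v v"
  unfolding bf_def
  by (simp add: algebra_simps sum.distrib sum_distrib_left power2_eq_square)

lemma nr_expand:
  "nr T (\<lambda>j. u j + t * v j) = nr T u + 2 * t * (\<Sum>i\<in>T. u i * v i) + t^2 * nr T v"
  unfolding nr_def
  by (simp add: algebra_simps sum.distrib sum_distrib_left power2_eq_square)

lemma bf_scale: "bf A T (\<lambda>j. r * u j) (\<lambda>j. r * u j) = r^2 * bf A T u u"
  unfolding bf_def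
  by (simp add: algebra_simps sum_distrib_left power2_eq_square)

lemma nr_scale: "nr T (\<lambda>j. r * u j) = r^2 * nr T u"
  unfolding nr_def
  by (simp add: algebra_simps sum_distrib_left power2_eq_square)

lemma bf_cong: "(\<And>i. i \<in> T \<Longrightarrow> u i = u' i) \<Longrightarrow> (\<And>i. i \<in> T \<Longrightarrow> v i = v' i) \<Longrightarrow>
   bf A T u v = bf A T u' v'"
  unfolding bf_def by (intro sum.cong refl) auto

lemma nr_cong: "(\<And>i. i \<in> T \<Longrightarrow> u i = u' i) \<Longrightarrow> nr T u = nr T u'"
  unfolding nr_def by (intro sum.cong refl) auto

lemma nr_nonneg: "0 \<le> nr T u" unfolding nr_def by (intro sum_nonneg) auto

lemma quad_coeff_zero:
  fixes c d :: real
  assumes "\<forall>t. 2 * t * c + t^2 * d \<le> 0"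
  shows "c = 0"
proof (rule ccontr)
  assume c: "c \<noteq> 0"
  define e where "e = \<bar>d\<bar> + 1"
  have pos: "e > 0" unfolding e_def by simp
  define t where "t = c / e"
  have "d \<ge> -(e - 1)" unfolding e_def by simp
  then have "t^2 * d \<ge> t^2 * (-(e - 1))" by (intro mult_left_mono) auto
  moreover have "2 * t * c + t^2 * (-(e - 1)) = c^2 * (e + 1) / e^2"
    unfolding t_def using pos by (simp add: field_simps power2_eq_square)
  moreover have "c^2 * (e + 1) / e^2 > 0"
    using c pos by (intro divide_pos_pos mult_pos_pos) auto
  ultimately show False using assms by (smt (verit))
qed

lemma compact_K:
  "compact (PiE UNIV (\<lambda>i. if i \<in> T then {-1..1::real} else {0}))"
proof -
  have "compactin (product_topology (\<lambda>i. euclidean) UNIV) (PiE UNIV (\<lambda>i. if i \<in> T then {-1..1::real} else {0}))"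
    by (subst compactin_PiE) auto
  then show ?thesis by (simp add: euclidean_product_topology)
qed

lemma cont_bf: "continuous_on UNIV (\<lambda>x::nat\<Rightarrow>real. bf A T x x)"
  unfolding bf_def by (intro continuous_intros continuous_on_product_coordinates)

lemma cont_nr: "continuous_on UNIV (\<lambda>x::nat\<Rightarrow>real. nr T x)"
  unfolding nr_def by (intro continuous_intros continuous_on_product_coordinates)


lemma sum_ind1: "finite T \<Longrightarrow> i \<in> T \<Longrightarrow> (\<Sum>a\<in>T. (if a = i then 1 else 0) * f a) = (f i::real)"
proof -
  assume "finite T" "i \<in> T"
  have "(\<Sum>a\<in>T. (if a = i then 1 else 0) * f a) = (\<Sum>a\<in>T. if a = i then f a else 0)"
    by (rule sum.cong) auto
  then show ?thesis using \<open>finite T\<close> \<open>i \<in> T\<close> by simp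
qed

lemma sum_ind2: "finite T \<Longrightarrow> i \<in> T \<Longrightarrow> (\<Sum>a\<in>T. f a * (if a = i then 1 else 0)) = (f i::real)"
  using sum_ind1[of T i f] by (simp add: mult.commute)

lemma max_eig:
  assumes fT: "finite T" and neT: "T \<noteq> {}"
    and sym: "\<forall>i\<in>T. \<forall>j\<in>T. A i j = A j i"
  shows "\<exists>M. is_eigenvalue_sub A T M \<and> (\<forall>y. bf A T y y \<le> M * nr T y)"
proof -
  define K where "K = PiE UNIV (\<lambda>i. if i \<in> T then {-1..1::real} else {0})"
  define Sph where "Sph = K \<inter> (\<lambda>x. nr T x) -` {1}"
  have "closed ((\<lambda>x. nr T x) -` {1})"
    by (rule closed_vimage[OF _ cont_nr]) auto
  then have cS: "compact Sph" unfolding Sph_def K_def using compact_K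
    by (intro compact_Int_closed) auto
  obtain t0 where t0: "t0 \<in> T" using neT by auto
  define e0 where "e0 = (\<lambda>j::nat. if j = t0 then 1 else (0::real))"
  have ee: "e0 j * e0 j = e0 j" for j unfolding e0_def by auto
  have "nr T e0 = 1" unfolding nr_def ee unfolding e0_def using fT t0 by simp
  moreover have "e0 \<in> K" unfolding K_def e0_def PiE_def extensional_def Pi_def using t0 by auto
  ultimately have "e0 \<in> Sph" unfolding Sph_def by auto
  then have neS: "Sph \<noteq> {}" by auto
  obtain x0 where x0S: "x0 \<in> Sph" and x0max: "\<forall>y\<in>Sph. bf A T y y \<le> bf A T x0 x0"
    using continuous_attains_sup[OF cS neS continuous_on_subset[OF cont_bf subset_UNIV]] by blast
  define M where "M = bf A T x0 x0"
  have nrx0: "nr T x0 = 1" using x0S unfolding Sph_def by auto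
  have hom: "bf A T y y \<le> M * nr T y" for y
  proof (cases "nr T y = 0")
    case True
    then have "\<forall>i\<in>T. y i * y i = 0" unfolding nr_def using fT
      by (subst (asm) sum_nonneg_eq_0_iff) auto
    then have "\<forall>i\<in>T. y i = 0" by auto
    then have "bf A T y y = 0" unfolding bf_def by auto
    then show ?thesis using True by simp
  next
    case False
    then have np: "nr T y > 0" using nr_nonneg[of T y] by auto
    define c where "c = sqrt (nr T y)"
    have cp: "c > 0" unfolding c_def using np by simp
    have c2: "c^2 = nr T y" unfolding c_def using np by simp
    define z where "z = (\<lambda>i. if i \<in> T then (1/c) * y i else 0)"
    have bnd: "-1 \<le> (1/c) * y i \<and> (1/c) * y i \<le> 1" if "i \<in> T" for i
    proof -
      have "y i * y i \<le> nr T y" unfolding nr_def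
        using member_le_sum[of i T "\<lambda>i. y i * y i"] fT that by auto
      then have "\<bar>y i\<bar>^2 \<le> c^2" using c2 by (simp add: power2_eq_square)
      then have "\<bar>y i\<bar> \<le> c" by (rule power2_le_imp_le) (use cp in auto)
      then have h: "-c \<le> y i" "y i \<le> c" by auto
      then show ?thesis using cp by (auto simp: field_simps)
    qed
    have zK: "z \<in> K" unfolding K_def z_def PiE_def extensional_def Pi_def using bnd by auto
    have zT: "\<And>i. i \<in> T \<Longrightarrow> z i = (1/c) * y i" unfolding z_def by simp
    have "nr T z = nr T (\<lambda>j. (1/c) * y j)" by (rule nr_cong) (rule zT)
    also have "\<dots> = (1/c)^2 * nr T y" by (rule nr_scale)
    also have "\<dots> = 1" using c2 cp np by (simp add: power_divide)
    finally have "nr T z = 1" .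
    then have "z \<in> Sph" unfolding Sph_def using zK by auto
    then have zM: "bf A T z z \<le> M" using x0max unfolding M_def by auto
    have "bf A T z z = bf A T (\<lambda>j. (1/c) * y j) (\<lambda>j. (1/c) * y j)" by (rule bf_cong) (simp_all add: zT)
    also have "\<dots> = (1/c)^2 * bf A T y y" by (rule bf_scale)
    finally have "(1/c)^2 * bf A T y y \<le> M" using zM by simp
    then have "bf A T y y / nr T y \<le> M" using c2 by (simp add: power_divide)
    then show ?thesis using np by (simp add: pos_divide_le_eq mult.commute)
  qed
  have eig: "(\<Sum>j\<in>T. A i j * x0 j) = M * x0 i" if iT: "i \<in> T" for i
  proof -
    define e where "e = (\<lambda>j::nat. if j = i then 1 else (0::real))"
    define g where "g = (\<Sum>j\<in>T. A i j * x0 j)"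
    have b1: "bf A T x0 e = g" unfolding bf_def e_def g_def
    proof -
      have "(\<Sum>a\<in>T. x0 a * (\<Sum>j\<in>T. A a j * (if j = i then 1 else 0)))
          = (\<Sum>a\<in>T. x0 a * A a i)"
        by (rule sum.cong) (simp_all add: sum_ind2 fT iT)
      also have "\<dots> = (\<Sum>a\<in>T. A i a * x0 a)"
        by (rule sum.cong) (use sym iT in auto)
      finally show "(\<Sum>a\<in>T. x0 a * (\<Sum>j\<in>T. A a j * (if j = i then 1 else 0)))
          = (\<Sum>j\<in>T. A i j * x0 j)" .
    qed
    have b2: "bf A T e x0 = g" unfolding bf_def e_def g_def using fT iT by (rule sum_ind1)
    have b3: "bf A T e e = A i i" unfolding bf_def e_def
      using fT iT by (simp add: sum_ind1 sum_ind2)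
    have n2: "(\<Sum>j\<in>T. x0 j * e j) = x0 i" unfolding e_def using fT iT by (rule sum_ind2)
    have n3: "nr T e = 1" unfolding nr_def e_def using fT iT by (simp add: sum_ind1)
    have "\<forall>t. 2 * t * (g - M * x0 i) + t^2 * (A i i - M) \<le> 0"
    proof
      fix t
      have "bf A T (\<lambda>j. x0 j + t * e j) (\<lambda>j. x0 j + t * e j) \<le> M * nr T (\<lambda>j. x0 j + t * e j)"
        by (rule hom)
      then have "M + t * (g + g) + t^2 * A i i \<le> M * (1 + 2 * t * x0 i + t^2)"
        unfolding bf_expand nr_expand b1 b2 b3 n2 n3 nrx0 M_def by simp
      then show "2 * t * (g - M * x0 i) + t^2 * (A i i - M) \<le> 0" by (simp add: algebra_simps)
    qed
    then have "g - M * x0 i = 0" by (rule quad_coeff_zero)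
    then show ?thesis unfolding g_def by simp
  qed
  have "\<exists>i\<in>T. x0 i \<noteq> 0"
  proof (rule ccontr)
    assume "\<not> ?thesis"
    then have "nr T x0 = 0" unfolding nr_def by auto
    then show False using nrx0 by simp
  qed
  then have "is_eigenvalue_sub A T M" unfolding is_eigenvalue_sub_def using eig by blast
  then show ?thesis using hom by blast
qed


theorem proposition2:
  fixes n :: nat and A :: "nat \<Rightarrow> nat \<Rightarrow> real" and S :: "nat set"
  assumes symm: "\<forall>i<n. \<forall>j<n. A i j = A j i"
    and nonneg: "\<forall>i<n. \<forall>j<n. 0 \<le> A i j"
    and diag: "\<forall>i<n. A i i = 0"
    and S_sub: "S \<subseteq> {..<n}"
    and S_ne: "S \<noteq> {}"
    and S_proper: "{..<n} - S \<noteq> {}"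
  shows "gamma_S A {..<n} S \<le> lambda_max_sub A ({..<n} - S)"
proof -
  define V where "V = {..<n}"
  define T where "T = V - S"
  have fV: "finite V" unfolding V_def by simp
  have fT: "finite T" unfolding T_def V_def by simp
  have neT: "T \<noteq> {}" using S_proper unfolding T_def V_def .
  have TV: "T \<subseteq> V" unfolding T_def by auto
  have symT: "\<forall>i\<in>T. \<forall>j\<in>T. A i j = A j i" using symm unfolding T_def V_def by auto
  obtain M where Meig: "is_eigenvalue_sub A T M" and Mb: "\<forall>y. bf A T y y \<le> M * nr T y"
    using max_eig[OF fT neT symT] by blast
  have lam: "lambda_max_sub A T = M"
    unfolding lambda_max_sub_def
  proof (rule Max_eqI)
    show "finite {\<mu>. is_eigenvalue_sub A T \<mu>}" by (rule eig_finite[OF fT])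
    show "M \<in> {\<mu>. is_eigenvalue_sub A T \<mu>}" using Meig by simp
    fix \<mu> assume "\<mu> \<in> {\<mu>. is_eigenvalue_sub A T \<mu>}"
    then obtain v where v1: "\<exists>i\<in>T. v i \<noteq> 0" and v2: "\<forall>i\<in>T. (\<Sum>j\<in>T. A i j * v j) = \<mu> * v i"
      unfolding is_eigenvalue_sub_def by auto
    have "bf A T v v = (\<Sum>i\<in>T. v i * (\<mu> * v i))" unfolding bf_def
      by (rule sum.cong) (simp_all add: v2)
    also have "\<dots> = \<mu> * nr T v" unfolding nr_def by (simp add: sum_distrib_left algebra_simps)
    finally have "\<mu> * nr T v \<le> M * nr T v" using Mb by metis
    moreover have "nr T v > 0"
    proof -
      from v1 obtain i where "i \<in> T" "v i \<noteq> 0" by blast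
      then have "v i * v i > 0" using not_real_square_gt_zero by blast
      moreover have "v i * v i \<le> nr T v" unfolding nr_def
        using member_le_sum[of i T "\<lambda>i. v i * v i"] fT \<open>i \<in> T\<close> by auto
      ultimately show ?thesis by linarith
    qed
    ultimately show "\<mu> \<le> M" by simp
  qed
  define F where "F = (\<lambda>x. Min ((\<lambda>i. (quad_form A V x - matvec A V x i) / (\<Sum>j\<in>V. x j * x j)) ` S))"
  have gam: "gamma_S A V S = Sup (F ` simplex_on V T)"
    unfolding gamma_S_def F_def T_def ..
  obtain t0 where t0: "t0 \<in> T" using neT by auto
  define e0 where "e0 = (\<lambda>j::nat. if j = t0 then 1 else (0::real))"
  have "e0 \<in> simplex_on V T"
    unfolding simplex_on_def e0_def using t0 TV fV by auto
  then have neX: "F ` simplex_on V T \<noteq> {}" by auto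
  have bound: "F x \<le> M" if xs: "x \<in> simplex_on V T" for x
  proof -
    have xnn: "\<forall>i\<in>V. 0 \<le> x i" and xsum: "(\<Sum>i\<in>V. x i) = 1"
      and xout: "\<forall>i. i \<notin> V \<longrightarrow> x i = 0" and xsupp: "{i\<in>V. 0 < x i} \<subseteq> T"
      using xs unfolding simplex_on_def by auto
    have x0: "x i = 0" if "i \<in> V - T" for i
    proof -
      have "i \<in> V" "i \<notin> T" using that by auto
      then have "\<not> 0 < x i" using xsupp by auto
      then show ?thesis using xnn \<open>i \<in> V\<close> by force
    qed
    have mv: "matvec A V x i = (\<Sum>j\<in>T. A i j * x j)" for i
      unfolding matvec_def by (rule sum.mono_neutral_right[OF fV TV]) (simp add: x0)
    have qf: "quad_form A V x = bf A T x x"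
      unfolding quad_form_def bf_def mv by (rule sum.mono_neutral_right[OF fV TV]) (simp add: x0)
    have nn: "(\<Sum>j\<in>V. x j * x j) = nr T x"
      unfolding nr_def by (rule sum.mono_neutral_right[OF fV TV]) (simp add: x0)
    have npos: "nr T x > 0"
    proof -
      have "(\<Sum>i\<in>T. x i) = 1" using xsum sum.mono_neutral_right[OF fV TV, of x] x0 by simp
      then obtain i where iT: "i \<in> T" "x i \<noteq> 0" by (metis sum.neutral zero_neq_one)
      then have "x i * x i > 0" using not_real_square_gt_zero by blast
      moreover have "x i * x i \<le> nr T x" unfolding nr_def
        using member_le_sum[of i T "\<lambda>i. x i * x i"] fT iT by auto
      ultimately show ?thesis by linarith
    qed
    obtain i0 where i0: "i0 \<in> S" using S_ne by auto
    have fS: "finite S" using S_sub finite_subset by blast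
    have "F x \<le> (quad_form A V x - matvec A V x i0) / (\<Sum>j\<in>V. x j * x j)"
      unfolding F_def using fS i0 by (intro Min_le) auto
    also have "\<dots> = (bf A T x x - matvec A V x i0) / nr T x" using qf nn by simp
    also have "\<dots> \<le> bf A T x x / nr T x"
    proof -
      have "0 \<le> matvec A V x i0" unfolding mv
      proof (rule sum_nonneg)
        fix j assume "j \<in> T"
        then have "j < n" "i0 < n" "0 \<le> x j" using i0 S_sub xnn TV unfolding V_def by auto
        then show "0 \<le> A i0 j * x j" using nonneg by simp
      qed
      then show ?thesis using npos by (simp add: divide_right_mono)
    qed
    also have "\<dots> \<le> M" using Mb npos by (simp add: pos_divide_le_eq)
    finally show ?thesis .
  qed
  have "Sup (F ` simplex_on V T) \<le> M"
    by (rule cSup_least[OF neX]) (use bound in auto)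
  then show ?thesis using gam lam unfolding V_def T_def by simp
qed

end
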